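(* If $G$ is a permutation graph then $L(G)^2$ is a trapezoid graph.
   Context: A permutation diagram on $n$ points: two horizontal lines $L_1,L_2$, on each of which the points $1,\dots,n$ are placed in some linear order, and for each $k$ the two points labeled $k$ are joined by a straight segment. A permutation graph is the intersection graph of the segments of a permutation diagram. A trapezoid diagram: on each of two horizontal lines $L_1,L_2$ choose $n$ intervals, and for each $k$ connect the left and right endpoints of the $k$-th interval on $L_1$ with the left and right endpoints of the $k$-th interval on $L_2$, giving $n$ trapezoids. A trapezoid graph is the intersection graph of the trapezoids of a trapezoid diagram. For a graph $H$, $L(H)^2$ has the edges of $H$ as vertices, two distinct edges $e,f$ being adjacent if they share an endpoint or some edge of $H$ joins an endpoint of $e$ to an endpoint of $f$. *)

theory Defs
  imports "HOL-Analysis.Analysis"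
begin

definition simple_graph :: "'a set \<Rightarrow> 'a set set \<Rightarrow> bool" where
  "simple_graph V E \<longleftrightarrow> finite V \<and> (\<forall>e\<in>E. e \<subseteq> V \<and> card e = 2)"

text \<open>The two horizontal lines: L1 is y = 1, L2 is y = 0, in the plane real \<times> real.\<close>
definition seg :: "real \<Rightarrow> real \<Rightarrow> (real \<times> real) set" where
  "seg a b = closed_segment (a, 1) (b, 0)"

definition trapezoid :: "real \<Rightarrow> real \<Rightarrow> real \<Rightarrow> real \<Rightarrow> (real \<times> real) set" where
  "trapezoid a1 b1 a2 b2 = convex hull {(a1, 1), (b1, 1), (a2, 0), (b2, 0)}"

text \<open>G is (isomorphic to) the intersection graph of the segments of a permutation diagram:
  p1 v, p2 v are the (pairwise distinct) positions of the point labelled v on L1, L2.\<close>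
definition permutation_graph :: "'a set \<Rightarrow> 'a set set \<Rightarrow> bool" where
  "permutation_graph V E \<longleftrightarrow> simple_graph V E \<and>
     (\<exists>p1 p2 :: 'a \<Rightarrow> real. inj_on p1 V \<and> inj_on p2 V \<and>
        (\<forall>u\<in>V. \<forall>v\<in>V. u \<noteq> v \<longrightarrow>
           ({u, v} \<in> E \<longleftrightarrow> seg (p1 u) (p2 u) \<inter> seg (p1 v) (p2 v) \<noteq> {})))"

definition trapezoid_graph :: "'a set \<Rightarrow> 'a set set \<Rightarrow> bool" where
  "trapezoid_graph V E \<longleftrightarrow> simple_graph V E \<and>
     (\<exists>l1 r1 l2 r2 :: 'a \<Rightarrow> real. (\<forall>v\<in>V. l1 v \<le> r1 v \<and> l2 v \<le> r2 v) \<and>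
        (\<forall>u\<in>V. \<forall>v\<in>V. u \<noteq> v \<longrightarrow>
           ({u, v} \<in> E \<longleftrightarrow>
              trapezoid (l1 u) (r1 u) (l2 u) (r2 u) \<inter> trapezoid (l1 v) (r1 v) (l2 v) (r2 v) \<noteq> {})))"

definition line_graph_sq_edges :: "'a set set \<Rightarrow> 'a set set set" where
  "line_graph_sq_edges E = {{e, f} | e f. e \<in> E \<and> f \<in> E \<and> e \<noteq> f \<and>
      (e \<inter> f \<noteq> {} \<or> (\<exists>x\<in>e. \<exists>y\<in>f. {x, y} \<in> E))}"

end

theory Submission
  imports Defs
begin

lemma sep:
  fixes w :: "real \<times> real"
  assumes "\<forall>q\<in>A. inner w q < k" "\<forall>q\<in>B. inner w q > k"
  shows "convex hull A \<inter> convex hull B = {}"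
proof -
  have "convex hull A \<subseteq> {q. inner w q < k}"
    by (rule hull_minimal) (use assms(1) convex_halfspace_lt in auto)
  moreover have "convex hull B \<subseteq> {q. inner w q > k}"
    by (rule hull_minimal) (use assms(2) convex_halfspace_gt in auto)
  ultimately show ?thesis
  proof (intro equalityI subsetI)
    fix q assume "q \<in> convex hull A \<inter> convex hull B"
      "convex hull A \<subseteq> {q. inner w q < k}" "convex hull B \<subseteq> {q. inner w q > k}"
    hence "inner w q < k" "inner w q > k" by auto
    thus "q \<in> {}" by simp
  qed simp
qed

lemma seg_disj:
  assumes "a < c" "b < d" shows "seg a b \<inter> seg c d = {}"
  unfolding seg_def segment_convex_hull
  by (rule sep[where w="(2, b+d-a-c)" and k="b+d"]) (use assms in \<open>auto simp: inner_Pair\<close>)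

lemma seg_cross:
  assumes "a < c" "d < b" shows "seg a b \<inter> seg c d \<noteq> {}"
proof -
  define t where "t = (c-a)/((c-a)+(b-d))"
  have t0: "0 \<le> t" "t \<le> 1" using assms by (auto simp: t_def field_simps)
  have eq: "(1-t)*a + t*b = (1-t)*c + t*d"
    using assms by (simp add: t_def field_simps)
  have "((1-t)*a + t*b, 1-t) \<in> seg a b"
    unfolding seg_def closed_segment_def using t0 by (auto intro!: exI[of _ t])
  moreover have "((1-t)*a + t*b, 1-t) \<in> seg c d"
    unfolding seg_def closed_segment_def using t0 eq by (auto intro!: exI[of _ t])
  ultimately show ?thesis by blast
qed

lemma seg_iff:
  assumes "a \<noteq> c" "b \<noteq> d"
  shows "seg a b \<inter> seg c d \<noteq> {} \<longleftrightarrow> (a<c \<and> d<b) \<or> (c<a \<and> b<d)"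
proof
  assume h: "seg a b \<inter> seg c d \<noteq> {}"
  show "(a<c \<and> d<b) \<or> (c<a \<and> b<d)"
  proof (rule ccontr)
    assume "\<not> ?thesis"
    hence "(a<c \<and> b<d) \<or> (c<a \<and> d<b)" using assms by auto
    thus False using seg_disj[of a c b d] seg_disj[of c a d b] h by auto
  qed
next
  assume "(a<c \<and> d<b) \<or> (c<a \<and> b<d)"
  thus "seg a b \<inter> seg c d \<noteq> {}" using seg_cross[of a c d b] seg_cross[of c a b d] by auto
qed

lemma in_seg_h:
  fixes l r t y :: real
  assumes "l \<le> t" "t \<le> r" shows "(t,y) \<in> closed_segment (l,y) (r,y)"
proof (cases "l = r")
  case True thus ?thesis using assms by auto
next
  case False
  define u where "u = (t-l)/(r-l)"
  have "0 \<le> u" "u \<le> 1" using assms False by (auto simp: u_def field_simps)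
  moreover have "(1-u)*l + u*r = t"
  proof -
    have "(1-u)*l + u*r = l + u*(r-l)" by (simp add: algebra_simps)
    also have "u*(r-l) = t - l" using False by (simp add: u_def)
    finally show ?thesis by simp
  qed
  ultimately show ?thesis unfolding closed_segment_def
    by (auto intro!: exI[of _ u] simp: algebra_simps)
qed

lemma pt1_in_trap: "l1 \<le> t \<Longrightarrow> t \<le> r1 \<Longrightarrow> (t,1) \<in> trapezoid l1 r1 l2 r2"
  unfolding trapezoid_def
  by (rule subsetD[OF closed_segment_subset in_seg_h]) (auto intro: hull_inc)

lemma pt0_in_trap: "l2 \<le> t \<Longrightarrow> t \<le> r2 \<Longrightarrow> (t,0) \<in> trapezoid l1 r1 l2 r2"
  unfolding trapezoid_def
  by (rule subsetD[OF closed_segment_subset in_seg_h]) (auto intro: hull_inc)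

lemma seg_in_trap:
  "l1 \<le> a \<Longrightarrow> a \<le> r1 \<Longrightarrow> l2 \<le> b \<Longrightarrow> b \<le> r2 \<Longrightarrow> seg a b \<subseteq> trapezoid l1 r1 l2 r2"
  unfolding seg_def
  by (rule closed_segment_subset) (auto simp: trapezoid_def intro: pt1_in_trap[unfolded trapezoid_def] pt0_in_trap[unfolded trapezoid_def])

lemma trap_disj:
  assumes "r1 < l1'" "r2 < l2'" "l1\<le>r1" "l2\<le>r2" "l1'\<le>r1'" "l2'\<le>r2'"
  shows "trapezoid l1 r1 l2 r2 \<inter> trapezoid l1' r1' l2' r2' = {}"
  unfolding trapezoid_def
  by (rule sep[where w="(2, r2+l2'-r1-l1')" and k="r2+l2'"]) (use assms in \<open>auto simp: inner_Pair\<close>)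

lemma lsq_mem:
  assumes "e \<in> E" "f \<in> E" "e \<noteq> f"
  shows "{e,f} \<in> line_graph_sq_edges E \<longleftrightarrow> (e \<inter> f \<noteq> {} \<or> (\<exists>x\<in>e. \<exists>y\<in>f. {x,y} \<in> E))"
proof
  assume "{e,f} \<in> line_graph_sq_edges E"
  hence "\<exists>e' f'. {e,f} = {e',f'} \<and> e' \<in> E \<and> f' \<in> E \<and> e' \<noteq> f' \<and> (e' \<inter> f' \<noteq> {} \<or> (\<exists>x\<in>e'. \<exists>y\<in>f'. {x, y} \<in> E))"
    unfolding line_graph_sq_edges_def by (simp only: mem_Collect_eq)
  then obtain e' f' where h: "{e,f} = {e',f'}" "e' \<inter> f' \<noteq> {} \<or> (\<exists>x\<in>e'. \<exists>y\<in>f'. {x, y} \<in> E)"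
    by (elim exE conjE) (rule that, assumption+)
  from h(1) have "(e=e' \<and> f=f') \<or> (e=f' \<and> f=e')" by (simp only: doubleton_eq_iff)
  thus "e \<inter> f \<noteq> {} \<or> (\<exists>x\<in>e. \<exists>y\<in>f. {x,y} \<in> E)"
  proof
    assume "e=e' \<and> f=f'" thus ?thesis using h(2) by simp
  next
    assume ef: "e=f' \<and> f=e'"
    show ?thesis
    proof (cases "e' \<inter> f' \<noteq> {}")
      case True thus ?thesis using ef by blast
    next
      case False
      then obtain x y where "x\<in>e'" "y\<in>f'" "{x,y}\<in>E" using h(2) by blast
      moreover have "{y,x} = {x,y}" by (rule insert_commute)
      ultimately show ?thesis using ef by metis
    qed
  qed
next
  assume "e \<inter> f \<noteq> {} \<or> (\<exists>x\<in>e. \<exists>y\<in>f. {x,y} \<in> E)"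
  hence "e \<in> E \<and> f \<in> E \<and> e \<noteq> f \<and> (e \<inter> f \<noteq> {} \<or> (\<exists>x\<in>e. \<exists>y\<in>f. {x, y} \<in> E))"
    using assms by simp
  hence "\<exists>e' f'. {e,f} = {e',f'} \<and> e' \<in> E \<and> f' \<in> E \<and> e' \<noteq> f' \<and> (e' \<inter> f' \<noteq> {} \<or> (\<exists>x\<in>e'. \<exists>y\<in>f'. {x, y} \<in> E))"
    by (intro exI[of _ e] exI[of _ f]) simp
  thus "{e,f} \<in> line_graph_sq_edges E" unfolding line_graph_sq_edges_def by (simp only: mem_Collect_eq)
qed

lemma order_lemma:
  fixes L :: "'a \<Rightarrow> 'a \<Rightarrow> bool"
  assumes tr: "\<And>x y z. L x y \<Longrightarrow> L y z \<Longrightarrow> L x z"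
    and tot: "\<forall>x\<in>{u,v}. \<forall>y\<in>{w,z}. L x y \<or> L y x"
    and "\<not> L u v" "\<not> L v u" "\<not> L w z" "\<not> L z w"
  shows "(\<forall>x\<in>{u,v}. \<forall>y\<in>{w,z}. L x y) \<or> (\<forall>x\<in>{u,v}. \<forall>y\<in>{w,z}. L y x)"
proof -
  have t: "L u w \<or> L w u" "L u z \<or> L z u" "L v w \<or> L w v" "L v z \<or> L z v" using tot by auto
  show ?thesis
  proof (cases "L u w")
    case True
    have "L v w" using t(3) True tr assms(3) by blast
    moreover have "L u z" using t(2) True tr assms(6) by blast
    moreover have "L v z" using t(4) \<open>L v w\<close> tr assms(6) by blast
    ultimately show ?thesis using True by auto
  next
    case False
    hence "L w u" using t(1) by blast
    have "L w v" using t(3) \<open>L w u\<close> tr assms(4) by blast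
    moreover have "L z u" using t(2) \<open>L w u\<close> tr assms(5) by blast
    moreover have "L z v" using t(4) \<open>L w v\<close> tr assms(5) by blast
    ultimately show ?thesis using \<open>L w u\<close> by auto
  qed
qed

theorem lemma6:
  fixes V :: "'a set" and E :: "'a set set"
  assumes "permutation_graph V E"
  shows "trapezoid_graph E (line_graph_sq_edges E)"
proof -
  from assms obtain p1 p2 :: "'a \<Rightarrow> real" where sg: "simple_graph V E" and i1: "inj_on p1 V"
    and i2: "inj_on p2 V"
    and pe: "\<forall>u\<in>V. \<forall>v\<in>V. u \<noteq> v \<longrightarrow> ({u, v} \<in> E \<longleftrightarrow> seg (p1 u) (p2 u) \<inter> seg (p1 v) (p2 v) \<noteq> {})"
    unfolding permutation_graph_def by blast
  have finV: "finite V" and eV: "\<And>e. e\<in>E \<Longrightarrow> e \<subseteq> V \<and> card e = 2"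
    using sg unfolding simple_graph_def by auto
  have finE: "finite E" using eV finV
    by (meson PowI finite_Pow_iff rev_finite_subset subsetI)
  have fe: "\<And>e. e\<in>E \<Longrightarrow> finite e \<and> e \<noteq> {}" using eV
    by (metis card.empty card.infinite zero_neq_numeral)
  define L where "L x y \<longleftrightarrow> p1 x < p1 y \<and> p2 x < p2 y" for x y
  have adjV: "\<And>u v. u\<in>V \<Longrightarrow> v\<in>V \<Longrightarrow> u\<noteq>v \<Longrightarrow> {u,v}\<in>E \<longleftrightarrow> \<not> L u v \<and> \<not> L v u"
  proof -
    fix u v assume uv: "u\<in>V" "v\<in>V" "u\<noteq>v"
    have "p1 u \<noteq> p1 v" "p2 u \<noteq> p2 v" using i1 i2 uv by (auto dest: inj_onD)
    with seg_iff[OF this] pe uv show "{u,v}\<in>E \<longleftrightarrow> \<not> L u v \<and> \<not> L v u"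
      unfolding L_def by auto
  qed
  define l1 where "l1 e = Min (p1 ` e)" for e :: "'a set"
  define r1 where "r1 e = Max (p1 ` e)" for e :: "'a set"
  define l2 where "l2 e = Min (p2 ` e)" for e :: "'a set"
  define r2 where "r2 e = Max (p2 ` e)" for e :: "'a set"
  have bnd: "\<And>e x. e\<in>E \<Longrightarrow> x\<in>e \<Longrightarrow> l1 e \<le> p1 x \<and> p1 x \<le> r1 e \<and> l2 e \<le> p2 x \<and> p2 x \<le> r2 e"
    using fe unfolding l1_def r1_def l2_def r2_def by auto
  have exl1: "\<And>e. e\<in>E \<Longrightarrow> \<exists>x\<in>e. l1 e = p1 x" unfolding l1_def
  proof -
    fix e assume "e \<in> E"
    hence "Min (p1 ` e) \<in> p1 ` e" using fe by (intro Min_in) auto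
    thus "\<exists>x\<in>e. Min (p1 ` e) = p1 x" by auto
  qed
  have exr1: "\<And>e. e\<in>E \<Longrightarrow> \<exists>x\<in>e. r1 e = p1 x" unfolding r1_def
  proof -
    fix e assume "e \<in> E"
    hence "Max (p1 ` e) \<in> p1 ` e" using fe by (intro Max_in) auto
    thus "\<exists>x\<in>e. Max (p1 ` e) = p1 x" by auto
  qed
  have exl2: "\<And>e. e\<in>E \<Longrightarrow> \<exists>x\<in>e. l2 e = p2 x" unfolding l2_def
  proof -
    fix e assume "e \<in> E"
    hence "Min (p2 ` e) \<in> p2 ` e" using fe by (intro Min_in) auto
    thus "\<exists>x\<in>e. Min (p2 ` e) = p2 x" by auto
  qed
  have exr2: "\<And>e. e\<in>E \<Longrightarrow> \<exists>x\<in>e. r2 e = p2 x" unfolding r2_def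
  proof -
    fix e assume "e \<in> E"
    hence "Max (p2 ` e) \<in> p2 ` e" using fe by (intro Max_in) auto
    thus "\<exists>x\<in>e. Max (p2 ` e) = p2 x" by auto
  qed
  have le: "\<forall>e\<in>E. l1 e \<le> r1 e \<and> l2 e \<le> r2 e"
  proof
    fix e assume "e\<in>E"
    then obtain x where "x\<in>e" using fe by blast
    thus "l1 e \<le> r1 e \<and> l2 e \<le> r2 e" using bnd[OF \<open>e\<in>E\<close>] by force
  qed
  have sg2: "simple_graph E (line_graph_sq_edges E)"
    unfolding simple_graph_def line_graph_sq_edges_def using finE by (auto simp: card_2_iff)
  have main: "{e,f} \<in> line_graph_sq_edges E \<longleftrightarrow>
      trapezoid (l1 e) (r1 e) (l2 e) (r2 e) \<inter> trapezoid (l1 f) (r1 f) (l2 f) (r2 f) \<noteq> {}"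
    if ef: "e\<in>E" "f\<in>E" "e\<noteq>f" for e f
  proof
    assume "{e,f} \<in> line_graph_sq_edges E"
    hence c: "e \<inter> f \<noteq> {} \<or> (\<exists>x\<in>e. \<exists>y\<in>f. {x,y} \<in> E)" using lsq_mem[OF ef] by simp
    show "trapezoid (l1 e) (r1 e) (l2 e) (r2 e) \<inter> trapezoid (l1 f) (r1 f) (l2 f) (r2 f) \<noteq> {}"
    proof (cases "e \<inter> f \<noteq> {}")
      case True
      then obtain x where x: "x\<in>e" "x\<in>f" by auto
      have "(p1 x, 1) \<in> trapezoid (l1 e) (r1 e) (l2 e) (r2 e)"
        using bnd[OF ef(1) x(1)] by (intro pt1_in_trap) auto
      moreover have "(p1 x, 1) \<in> trapezoid (l1 f) (r1 f) (l2 f) (r2 f)"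
        using bnd[OF ef(2) x(2)] by (intro pt1_in_trap) auto
      ultimately show ?thesis by blast
    next
      case False
      with c obtain x y where xy: "x\<in>e" "y\<in>f" "{x,y}\<in>E" by auto
      have "x \<noteq> y" using False xy by auto
      moreover have "x\<in>V" "y\<in>V" using xy eV ef by auto
      ultimately have "seg (p1 x) (p2 x) \<inter> seg (p1 y) (p2 y) \<noteq> {}" using pe xy by auto
      moreover have "seg (p1 x) (p2 x) \<subseteq> trapezoid (l1 e) (r1 e) (l2 e) (r2 e)"
        using bnd[OF ef(1) xy(1)] by (intro seg_in_trap) auto
      moreover have "seg (p1 y) (p2 y) \<subseteq> trapezoid (l1 f) (r1 f) (l2 f) (r2 f)"
        using bnd[OF ef(2) xy(2)] by (intro seg_in_trap) auto
      ultimately show ?thesis by blast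
    qed
  next
    assume T: "trapezoid (l1 e) (r1 e) (l2 e) (r2 e) \<inter> trapezoid (l1 f) (r1 f) (l2 f) (r2 f) \<noteq> {}"
    show "{e,f} \<in> line_graph_sq_edges E"
    proof (rule ccontr)
      assume "{e,f} \<notin> line_graph_sq_edges E"
      hence nc: "e \<inter> f = {}" "\<forall>x\<in>e. \<forall>y\<in>f. {x,y} \<notin> E" using lsq_mem[OF ef] by auto
      obtain u v where e: "e = {u,v}" "u\<noteq>v" using eV[OF ef(1)] by (meson card_2_iff)
      obtain w z where f: "f = {w,z}" "w\<noteq>z" using eV[OF ef(2)] by (meson card_2_iff)
      have eVV: "e \<subseteq> V" "f \<subseteq> V" using eV ef by auto
      have tot: "\<forall>x\<in>{u,v}. \<forall>y\<in>{w,z}. L x y \<or> L y x"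
      proof (intro ballI)
        fix x y assume xy: "x\<in>{u,v}" "y\<in>{w,z}"
        hence "x \<noteq> y" "x\<in>V" "y\<in>V" using nc e f eVV by auto
        moreover have "p1 x \<noteq> p1 y" "p2 x \<noteq> p2 y" using i1 i2 calculation by (auto dest: inj_onD)
        moreover have "{x,y}\<notin>E" using nc xy e f by auto
        ultimately show "L x y \<or> L y x" using adjV[of x y] unfolding L_def by auto
      qed
      have nuv: "\<not> L u v" "\<not> L v u" using adjV[of u v] e eVV ef(1) by auto
      have nwz: "\<not> L w z" "\<not> L z w" using adjV[of w z] f eVV ef(2) by auto
      have tr: "\<And>x y z. L x y \<Longrightarrow> L y z \<Longrightarrow> L x z" unfolding L_def by auto
      from order_lemma[OF tr tot nuv nwz]
      have "(\<forall>x\<in>e. \<forall>y\<in>f. L x y) \<or> (\<forall>x\<in>e. \<forall>y\<in>f. L y x)" using e f by simp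
      thus False
      proof
        assume A: "\<forall>x\<in>e. \<forall>y\<in>f. L x y"
        obtain a b c d where "a\<in>e" "r1 e = p1 a" "b\<in>f" "l1 f = p1 b" "c\<in>e" "r2 e = p2 c" "d\<in>f" "l2 f = p2 d"
          using exr1[OF ef(1)] exl1[OF ef(2)] exr2[OF ef(1)] exl2[OF ef(2)] by metis
        hence "r1 e < l1 f" "r2 e < l2 f" using A unfolding L_def by auto
        hence "trapezoid (l1 e) (r1 e) (l2 e) (r2 e) \<inter> trapezoid (l1 f) (r1 f) (l2 f) (r2 f) = {}"
          using le ef by (intro trap_disj) auto
        thus False using T by simp
      next
        assume A: "\<forall>x\<in>e. \<forall>y\<in>f. L y x"
        obtain a b c d where "a\<in>f" "r1 f = p1 a" "b\<in>e" "l1 e = p1 b" "c\<in>f" "r2 f = p2 c" "d\<in>e" "l2 e = p2 d"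
          using exr1[OF ef(2)] exl1[OF ef(1)] exr2[OF ef(2)] exl2[OF ef(1)] by metis
        hence "r1 f < l1 e" "r2 f < l2 e" using A unfolding L_def by auto
        hence "trapezoid (l1 f) (r1 f) (l2 f) (r2 f) \<inter> trapezoid (l1 e) (r1 e) (l2 e) (r2 e) = {}"
          using le ef by (intro trap_disj) auto
        thus False using T by blast
      qed
    qed
  qed
  have X: "\<forall>e\<in>E. \<forall>f\<in>E. e \<noteq> f \<longrightarrow> ({e, f} \<in> line_graph_sq_edges E \<longleftrightarrow>
      trapezoid (l1 e) (r1 e) (l2 e) (r2 e) \<inter> trapezoid (l1 f) (r1 f) (l2 f) (r2 f) \<noteq> {})"
    by (intro ballI impI) (rule main)
  show ?thesis unfolding trapezoid_graph_def
    apply (rule conjI[OF sg2])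
    apply (rule exI[of _ l1], rule exI[of _ r1], rule exI[of _ l2], rule exI[of _ r2])
    apply (rule conjI[OF le X])
    done
qed

end
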